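(* Let $\delta\in(0,1)$ and let $S \subset [p]$ with $|S| = s$ satisfy $M(S) := |S \triangle S^\star|/2 \ge \delta s$, where $S^\star = \operatorname{supp}(\beta^\star)$. Let $\Delta(S) := \|\Sigma^{-1}(Y - X\mathbb{1}_S)\|_2^2 - \|\Sigma^{-1}(Y - X\mathbb{1}_{S^\star})\|_2^2$. Then $$ \mathbb{P}(\Delta(S) \le 0) \le \left(1 + \frac{\delta s}{2\sigma_1^2}\right)^{-n_1/2}\left(1 + \frac{\delta s}{2\sigma_2^2}\right)^{-n_2/2}. $$
   Context: Sample sizes $n_1,n_2\ge1$, $n = n_1+n_2$. $X\in\mathbb{R}^{n\times p}$ has i.i.d. $\mathcal{N}(0,1)$ entries; $0<\sigma_1^2<\sigma_2^2$; $\Sigma = \begin{pmatrix} \sigma_1 I_{n_1} & 0 \\ 0 & \sigma_2 I_{n_2}\end{pmatrix}$; $W\sim\mathcal{N}(0,I_n)$ independent of $X$; $Z = \Sigma W$; $Y = X\beta^\star + Z$ with $\beta^\star\in\{0,1\}^p$ deterministic having exactly $s$ ones. For $S\subset[p]$, $\mathbb{1}_S\in\{0,1\}^p$ is the indicator vector of $S$. $A\triangle B = (A\cup B)\setminus(A\cap B)$. *)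

theory Defs
  imports "HOL-Probability.Probability"
begin

text \<open>Diagonal entries of Sigma: sigma1 on rows i < n1, sigma2 on rows n1 <= i < n1+n2.\<close>
definition sig :: "nat \<Rightarrow> real \<Rightarrow> real \<Rightarrow> nat \<Rightarrow> real" where
  "sig n1 \<sigma>1 \<sigma>2 i = (if i < n1 then \<sigma>1 else \<sigma>2)"

text \<open>Response Y = X beta_star + Sigma W, with beta_star the indicator of Sstar.\<close>
definition resp :: "nat \<Rightarrow> real \<Rightarrow> real \<Rightarrow> nat \<Rightarrow> nat set \<Rightarrow>
    (nat \<Rightarrow> nat \<Rightarrow> real) \<Rightarrow> (nat \<Rightarrow> real) \<Rightarrow> nat \<Rightarrow> real" where
  "resp n1 \<sigma>1 \<sigma>2 p Sstar x w i =
     (\<Sum>j<p. x i j * indicator Sstar j) + sig n1 \<sigma>1 \<sigma>2 i * w i"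

definition wres :: "nat \<Rightarrow> nat \<Rightarrow> real \<Rightarrow> real \<Rightarrow> nat \<Rightarrow>
    (nat \<Rightarrow> nat \<Rightarrow> real) \<Rightarrow> (nat \<Rightarrow> real) \<Rightarrow> nat set \<Rightarrow> real" where
  "wres n n1 \<sigma>1 \<sigma>2 p x y S =
     (\<Sum>i<n. (inverse (sig n1 \<sigma>1 \<sigma>2 i) * (y i - (\<Sum>j<p. x i j * indicator S j)))\<^sup>2)"

end

theory Submission
  imports Defs
begin


lemma gauss_lin:
  "(\<integral>\<^sup>+w. ennreal (std_normal_density w * exp (- b * w)) \<partial>lborel) = ennreal (exp (b\<^sup>2 / 2))"
proof -
  have eq: "std_normal_density w * exp (- b * w) = exp (b\<^sup>2 / 2) * normal_density (-b) 1 w" for w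
    by (simp add: normal_density_def mult_exp_exp power2_eq_square field_simps)
  have "(\<integral>\<^sup>+w. ennreal (std_normal_density w * exp (- b * w)) \<partial>lborel)
      = (\<integral>\<^sup>+w. ennreal (exp (b\<^sup>2 / 2)) * ennreal (normal_density (-b) 1 w) \<partial>lborel)"
    by (intro nn_integral_cong, subst eq, intro ennreal_mult) auto
  also have "\<dots> = ennreal (exp (b\<^sup>2 / 2)) * (\<integral>\<^sup>+w. ennreal (normal_density (-b) 1 w) \<partial>lborel)"
    by (rule nn_integral_cmult) simp
  also have "(\<integral>\<^sup>+w. ennreal (normal_density (-b) 1 w) \<partial>lborel) = 1"
    by (subst nn_integral_eq_integral) auto
  finally show ?thesis by simp
qed

lemma gauss_sq:
  assumes "0 < \<tau>" "0 \<le> c"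
  shows "(\<integral>\<^sup>+g. ennreal (normal_density 0 \<tau> g * exp (- c * g\<^sup>2)) \<partial>lborel) = ennreal (1 / sqrt (1 + 2 * c * \<tau>\<^sup>2))"
proof -
  define q where "q = 1 + 2 * c * \<tau>\<^sup>2"
  have q: "q > 0" using assms by (simp add: q_def add_pos_nonneg)
  define t where "t = \<tau> / sqrt q"
  have t: "t > 0" using assms q by (simp add: t_def)
  have eq: "normal_density 0 \<tau> g * exp (- c * g\<^sup>2) = (1 / sqrt q) * normal_density 0 t g" for g
  proof -
    have t2: "t\<^sup>2 = \<tau>\<^sup>2 / q" using q by (simp add: t_def power_divide)
    have e1: "- (g\<^sup>2 / (2 * \<tau>\<^sup>2)) + - c * g\<^sup>2 = - (g\<^sup>2 / (2 * t\<^sup>2))"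
      using q assms by (simp add: t2 q_def field_simps)
    have e2: "sqrt (2 * pi * t\<^sup>2) = sqrt (2 * pi * \<tau>\<^sup>2) / sqrt q"
      using q by (simp add: t2 real_sqrt_divide real_sqrt_mult)
    have "normal_density 0 \<tau> g * exp (- c * g\<^sup>2) = 1 / sqrt (2 * pi * \<tau>\<^sup>2) * exp (- (g\<^sup>2 / (2 * \<tau>\<^sup>2)) + - c * g\<^sup>2)"
      by (simp add: normal_density_def exp_diff exp_minus field_simps)
    also have "\<dots> = (1 / sqrt q) * normal_density 0 t g"
      unfolding e1 normal_density_def e2 using q by simp
    finally show ?thesis .
  qed
  have "(\<integral>\<^sup>+g. ennreal (normal_density 0 \<tau> g * exp (- c * g\<^sup>2)) \<partial>lborel)
      = (\<integral>\<^sup>+g. ennreal (1 / sqrt q) * ennreal (normal_density 0 t g) \<partial>lborel)"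
    using q by (intro nn_integral_cong, subst eq, intro ennreal_mult) auto
  also have "\<dots> = ennreal (1 / sqrt q) * (\<integral>\<^sup>+g. ennreal (normal_density 0 t g) \<partial>lborel)"
    by (rule nn_integral_cmult) simp
  also have "(\<integral>\<^sup>+g. ennreal (normal_density 0 t g) \<partial>lborel) = 1"
    using t by (subst nn_integral_eq_integral) (auto intro: integrable_normal_density simp: integral_normal_density)
  finally show ?thesis by (simp add: q_def)
qed

lemma (in prob_space) row_mgf:
  assumes G: "distributed M lborel G (normal_density 0 \<tau>)" and tau: "0 < \<tau>"
    and W: "distributed M lborel Wv std_normal_density"
    and ind: "indep_var borel G borel Wv"
    and sig: "\<sigma> \<noteq> 0"
  shows "(\<integral>\<^sup>+\<omega>. ennreal (exp (- ((G \<omega> / \<sigma> + Wv \<omega>)\<^sup>2 - (Wv \<omega>)\<^sup>2) / 4)) \<partial>M)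
    = ennreal (1 / sqrt (1 + \<tau>\<^sup>2 / (4 * \<sigma>\<^sup>2)))"
proof -
  have J: "distributed M (lborel \<Otimes>\<^sub>M lborel) (\<lambda>x. (G x, Wv x))
      (\<lambda>(x, y). ennreal (normal_density 0 \<tau> x) * ennreal (std_normal_density y))"
  proof -
    have "indep_var lborel (id \<circ> G) lborel (id \<circ> Wv)"
      by (rule indep_var_compose[OF ind]) auto
    then have ind': "indep_var lborel G lborel Wv" by simp
    show ?thesis
      by (rule distributed_joint_indep[OF sigma_finite_lborel sigma_finite_lborel G W ind'])
  qed
  define F :: "real \<times> real \<Rightarrow> ennreal" where
    "F = (\<lambda>(g, w). ennreal (exp (- ((g / \<sigma> + w)\<^sup>2 - w\<^sup>2) / 4)))"
  have Fm[measurable]: "F \<in> borel_measurable (lborel \<Otimes>\<^sub>M lborel)"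
    unfolding F_def by measurable
  have "(\<integral>\<^sup>+\<omega>. ennreal (exp (- ((G \<omega> / \<sigma> + Wv \<omega>)\<^sup>2 - (Wv \<omega>)\<^sup>2) / 4)) \<partial>M)
      = (\<integral>\<^sup>+\<omega>. F (G \<omega>, Wv \<omega>) \<partial>M)" by (simp add: F_def)
  also have "\<dots> = (\<integral>\<^sup>+x. (\<lambda>(x, y). ennreal (normal_density 0 \<tau> x) * ennreal (std_normal_density y)) x * F x
      \<partial>(lborel \<Otimes>\<^sub>M lborel))"
    by (rule distributed_nn_integral[OF J Fm, symmetric])
  also have "\<dots> = (\<integral>\<^sup>+g. \<integral>\<^sup>+w. ennreal (normal_density 0 \<tau> g) * ennreal (std_normal_density w) * F (g, w) \<partial>lborel \<partial>lborel)"
    using Fm by (subst lborel.nn_integral_fst[symmetric]) (auto simp: case_prod_beta)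
  also have "\<dots> = (\<integral>\<^sup>+g. ennreal (normal_density 0 \<tau> g * exp (- (1 / (8 * \<sigma>\<^sup>2)) * g\<^sup>2)) \<partial>lborel)"
  proof (rule nn_integral_cong)
    fix g :: real
    define b where "b = g / (2 * \<sigma>)"
    have pw: "ennreal (normal_density 0 \<tau> g) * ennreal (std_normal_density w) * F (g, w)
        = ennreal (normal_density 0 \<tau> g * exp (- g\<^sup>2 / (4 * \<sigma>\<^sup>2))) * ennreal (std_normal_density w * exp (- b * w))" for w
    proof -
      have "exp (- ((g / \<sigma> + w)\<^sup>2 - w\<^sup>2) / 4) = exp (- g\<^sup>2 / (4 * \<sigma>\<^sup>2)) * exp (- b * w)"
        unfolding mult_exp_exp b_def using sig by (simp add: field_simps power2_eq_square)
      then show ?thesis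
        by (simp add: F_def ennreal_mult[symmetric] mult_ac)
    qed
    have "(\<integral>\<^sup>+w. ennreal (normal_density 0 \<tau> g) * ennreal (std_normal_density w) * F (g, w) \<partial>lborel)
        = ennreal (normal_density 0 \<tau> g * exp (- g\<^sup>2 / (4 * \<sigma>\<^sup>2))) * (\<integral>\<^sup>+w. ennreal (std_normal_density w * exp (- b * w)) \<partial>lborel)"
      unfolding pw by (rule nn_integral_cmult) simp
    also have "\<dots> = ennreal (normal_density 0 \<tau> g * exp (- g\<^sup>2 / (4 * \<sigma>\<^sup>2)) * exp (b\<^sup>2 / 2))"
      unfolding gauss_lin by (simp add: ennreal_mult[symmetric])
    also have "normal_density 0 \<tau> g * exp (- g\<^sup>2 / (4 * \<sigma>\<^sup>2)) * exp (b\<^sup>2 / 2)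
        = normal_density 0 \<tau> g * exp (- (1 / (8 * \<sigma>\<^sup>2)) * g\<^sup>2)"
      unfolding mult.assoc mult_exp_exp b_def using sig by (simp add: field_simps power2_eq_square)
    finally show "(\<integral>\<^sup>+w. ennreal (normal_density 0 \<tau> g) * ennreal (std_normal_density w) * F (g, w) \<partial>lborel)
        = ennreal (normal_density 0 \<tau> g * exp (- (1 / (8 * \<sigma>\<^sup>2)) * g\<^sup>2))" .
  qed
  also have "\<dots> = ennreal (1 / sqrt (1 + 2 * (1 / (8 * \<sigma>\<^sup>2)) * \<tau>\<^sup>2))"
    by (rule gauss_sq[OF tau]) simp
  also have "2 * (1 / (8 * \<sigma>\<^sup>2)) * \<tau>\<^sup>2 = \<tau>\<^sup>2 / (4 * \<sigma>\<^sup>2)"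
    by simp
  finally show ?thesis .
qed



lemma delta_eq:
  assumes "\<And>i. i < n \<Longrightarrow> sig n1 \<sigma>1 \<sigma>2 i \<noteq> 0"
  shows "wres n n1 \<sigma>1 \<sigma>2 p x (resp n1 \<sigma>1 \<sigma>2 p Sstar x w) S - wres n n1 \<sigma>1 \<sigma>2 p x (resp n1 \<sigma>1 \<sigma>2 p Sstar x w) Sstar
    = (\<Sum>i<n. ((\<Sum>j<p. x i j * (indicator Sstar j - indicator S j)) / sig n1 \<sigma>1 \<sigma>2 i + w i)\<^sup>2 - (w i)\<^sup>2)"
  unfolding wres_def resp_def sum_subtractf[symmetric]
proof (rule sum.cong[OF refl])
  fix i assume "i \<in> {..<n}"
  then have ne: "sig n1 \<sigma>1 \<sigma>2 i \<noteq> 0" using assms by simp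
  define A where "A = (\<Sum>j<p. x i j * (indicator Sstar j - indicator S j))"
  have 1: "(\<Sum>j<p. x i j * indicator Sstar j) + sig n1 \<sigma>1 \<sigma>2 i * w i - (\<Sum>j<p. x i j * indicator S j)
      = A + sig n1 \<sigma>1 \<sigma>2 i * w i"
    unfolding A_def by (simp add: right_diff_distrib sum_subtractf)
  have 2: "(\<Sum>j<p. x i j * indicator Sstar j) + sig n1 \<sigma>1 \<sigma>2 i * w i - (\<Sum>j<p. x i j * indicator Sstar j)
      = sig n1 \<sigma>1 \<sigma>2 i * w i" by simp
  show "(inverse (sig n1 \<sigma>1 \<sigma>2 i) * ((\<Sum>j<p. x i j * indicator Sstar j) + sig n1 \<sigma>1 \<sigma>2 i * w i - (\<Sum>j<p. x i j * indicator S j)))\<^sup>2 -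
        (inverse (sig n1 \<sigma>1 \<sigma>2 i) * ((\<Sum>j<p. x i j * indicator Sstar j) + sig n1 \<sigma>1 \<sigma>2 i * w i - (\<Sum>j<p. x i j * indicator Sstar j)))\<^sup>2 =
        (A / sig n1 \<sigma>1 \<sigma>2 i + w i)\<^sup>2 - (w i)\<^sup>2"
    unfolding 1 2 using ne by (simp add: field_simps)
qed

lemma one_row_le:
  fixes K d x :: real
  assumes "0 < x" "2 * d \<le> K" "0 \<le> d"
  shows "1 / sqrt (1 + K / (4 * x)) \<le> (1 + d / (2 * x)) powr (- 1 / 2)"
proof -
  have p: "0 < 1 + d / (2 * x)" using assms by (simp add: add_pos_nonneg)
  have "(1 + d / (2 * x)) powr (- 1 / 2) = 1 / sqrt (1 + d / (2 * x))"
    using p by (simp add: powr_minus_divide powr_half_sqrt[symmetric])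
  moreover have "d / (2 * x) \<le> K / (4 * x)" using assms by (simp add: field_simps)
  then have "sqrt (1 + d / (2 * x)) \<le> sqrt (1 + K / (4 * x))" by simp
  then have "1 / sqrt (1 + K / (4 * x)) \<le> 1 / sqrt (1 + d / (2 * x))"
    using p by (intro divide_left_mono) auto
  ultimately show ?thesis by simp
qed

lemma final_ineq:
  fixes K d :: real
  assumes "0 < \<sigma>1\<^sup>2" "0 < \<sigma>2\<^sup>2" "2 * d \<le> K" "0 \<le> d" "n = n1 + n2"
  shows "(\<Prod>i<n. 1 / sqrt (1 + K / (4 * (sig n1 \<sigma>1 \<sigma>2 i)\<^sup>2)))
    \<le> (1 + d / (2 * \<sigma>1\<^sup>2)) powr (- real n1 / 2) * (1 + d / (2 * \<sigma>2\<^sup>2)) powr (- real n2 / 2)"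
proof -
  define a where "a = (\<lambda>x::real. (1 + d / (2 * x)) powr (- 1 / 2))"
  have "(\<Prod>i<n. 1 / sqrt (1 + K / (4 * (sig n1 \<sigma>1 \<sigma>2 i)\<^sup>2))) \<le> (\<Prod>i<n. a ((sig n1 \<sigma>1 \<sigma>2 i)\<^sup>2))"
  proof (rule prod_mono)
    fix i assume "i \<in> {..<n}"
    have "0 < (sig n1 \<sigma>1 \<sigma>2 i)\<^sup>2" using assms by (simp add: sig_def)
    then show "0 \<le> 1 / sqrt (1 + K / (4 * (sig n1 \<sigma>1 \<sigma>2 i)\<^sup>2)) \<and>
      1 / sqrt (1 + K / (4 * (sig n1 \<sigma>1 \<sigma>2 i)\<^sup>2)) \<le> a ((sig n1 \<sigma>1 \<sigma>2 i)\<^sup>2)"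
      unfolding a_def using one_row_le[of "(sig n1 \<sigma>1 \<sigma>2 i)\<^sup>2" d K] assms
      by (auto intro!: divide_nonneg_nonneg add_nonneg_nonneg)
  qed
  also have "(\<Prod>i<n. a ((sig n1 \<sigma>1 \<sigma>2 i)\<^sup>2)) = (\<Prod>i\<in>{0..<n1}. a ((sig n1 \<sigma>1 \<sigma>2 i)\<^sup>2)) * (\<Prod>i\<in>{n1..<n1+n2}. a ((sig n1 \<sigma>1 \<sigma>2 i)\<^sup>2))"
    using assms(5) by (simp add: lessThan_atLeast0 prod.atLeastLessThan_concat)
  also have "\<dots> = a (\<sigma>1\<^sup>2) ^ n1 * a (\<sigma>2\<^sup>2) ^ n2"
    by (simp add: sig_def)
  also have "a (\<sigma>1\<^sup>2) ^ n1 = (1 + d / (2 * \<sigma>1\<^sup>2)) powr (- real n1 / 2)"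
  proof -
    have "1 + d / (2 * \<sigma>1\<^sup>2) \<noteq> 0" using assms by (smt (verit) divide_nonneg_pos)
    then show ?thesis unfolding a_def by (simp add: powr_power)
  qed
  also have "a (\<sigma>2\<^sup>2) ^ n2 = (1 + d / (2 * \<sigma>2\<^sup>2)) powr (- real n2 / 2)"
  proof -
    have "1 + d / (2 * \<sigma>2\<^sup>2) \<noteq> 0" using assms by (smt (verit) divide_nonneg_pos)
    then show ?thesis unfolding a_def by (simp add: powr_power)
  qed
  finally show ?thesis .
qed

theorem proposition3:
  fixes M :: "'a measure"
    and X :: "nat \<Rightarrow> nat \<Rightarrow> 'a \<Rightarrow> real"
    and W :: "nat \<Rightarrow> 'a \<Rightarrow> real"
    and n1 n2 n p s :: nat and \<sigma>1 \<sigma>2 \<delta> :: real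
    and Sstar S :: "nat set"
  assumes "prob_space M"
    and "n1 \<ge> 1" "n2 \<ge> 1" "n = n1 + n2"
    and "0 < \<sigma>1\<^sup>2" "\<sigma>1\<^sup>2 < \<sigma>2\<^sup>2"
    and "prob_space.indep_vars M (\<lambda>_. borel)
           (\<lambda>k. case k of Inl (i, j) \<Rightarrow> X i j | Inr i \<Rightarrow> W i)
           (Inl ` ({..<n} \<times> {..<p}) \<union> Inr ` {..<n})"
    and "\<And>i j. i < n \<Longrightarrow> j < p \<Longrightarrow> distributed M lborel (X i j) std_normal_density"
    and "\<And>i. i < n \<Longrightarrow> distributed M lborel (W i) std_normal_density"
    and "Sstar \<subseteq> {..<p}" "card Sstar = s"
    and "S \<subseteq> {..<p}" "card S = s"
    and "0 < \<delta>" "\<delta> < 1"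
    and "real (card ((S - Sstar) \<union> (Sstar - S))) / 2 \<ge> \<delta> * real s"
  shows "prob_space.prob M
           {\<omega> \<in> space M.
              (let x = (\<lambda>i j. X i j \<omega>);
                   y = resp n1 \<sigma>1 \<sigma>2 p Sstar x (\<lambda>i. W i \<omega>)
               in wres n n1 \<sigma>1 \<sigma>2 p x y S - wres n n1 \<sigma>1 \<sigma>2 p x y Sstar) \<le> 0}
         \<le> (1 + \<delta> * real s / (2 * \<sigma>1\<^sup>2)) powr (- real n1 / 2)
           * (1 + \<delta> * real s / (2 * \<sigma>2\<^sup>2)) powr (- real n2 / 2)"
proof -
  interpret prob_space M by fact
  note indep = assms(7) and XN = assms(8) and WN = assms(9)
  define Y where "Y = (\<lambda>k. case k of Inl (i, j) \<Rightarrow> X i j | Inr i \<Rightarrow> W i)"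
  define I where "I = Inl ` ({..<n} \<times> {..<p}) \<union> (Inr ` {..<n} :: (nat \<times> nat + nat) set)"
  have indY: "indep_vars (\<lambda>_. borel) Y I" using indep unfolding Y_def I_def .
  define sg where "sg = sig n1 \<sigma>1 \<sigma>2"
  have sgne: "sg i \<noteq> 0" for i
    using assms(5,6) by (auto simp: sg_def sig_def)
  define v where "v = (\<lambda>j. indicator Sstar j - indicator S j :: real)"
  define T where "T = (S - Sstar) \<union> (Sstar - S)"
  define K where "K = real (card T)"
  define G where "G = (\<lambda>i \<omega>. \<Sum>j<p. X i j \<omega> * v j)"
  define D where "D = (\<lambda>i \<omega>. (G i \<omega> / sg i + W i \<omega>)\<^sup>2 - (W i \<omega>)\<^sup>2)"
  define A where "A = {\<omega> \<in> space M.
              (let x = (\<lambda>i j. X i j \<omega>);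
                   y = resp n1 \<sigma>1 \<sigma>2 p Sstar x (\<lambda>i. W i \<omega>)
               in wres n n1 \<sigma>1 \<sigma>2 p x y S - wres n n1 \<sigma>1 \<sigma>2 p x y Sstar) \<le> 0}"
  define R where "R = (1 + \<delta> * real s / (2 * \<sigma>1\<^sup>2)) powr (- real n1 / 2)
           * (1 + \<delta> * real s / (2 * \<sigma>2\<^sup>2)) powr (- real n2 / 2)"
  have R0: "0 \<le> R" unfolding R_def by simp
  have Aeq: "A = {\<omega> \<in> space M. (\<Sum>i<n. D i \<omega>) \<le> 0}"
    unfolding A_def D_def G_def v_def Let_def
    using delta_eq[of n n1 \<sigma>1 \<sigma>2] sgne unfolding sg_def by auto
  show ?thesis
  proof (cases "s = 0")
    case True
    then show ?thesis by simp
  next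
    case False
    have Tsub: "T \<subseteq> {..<p}" using assms(10,12) by (auto simp: T_def)
    have finT: "finite T" using Tsub finite_subset by blast
    have Kpos: "K \<ge> 2 * \<delta> * real s" using assms(16) by (simp add: K_def T_def)
    then have "K > 0" using False assms(14) by (smt (verit) mult_pos_pos of_nat_0_less_iff gr0I)
    then have Tne: "T \<noteq> {}" by (auto simp: K_def)

    have Ksq: "(sqrt K)\<^sup>2 = K" using \<open>K > 0\<close> by simp
    have vT: "j \<in> T \<Longrightarrow> \<bar>v j\<bar> = 1" for j by (auto simp: v_def T_def)
    have vnT: "j \<notin> T \<Longrightarrow> v j = 0" for j by (auto simp: v_def T_def split: split_indicator)
    have rvY: "k \<in> I \<Longrightarrow> random_variable borel (Y k)" for k
      using indY by (auto simp: indep_vars_def)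
    have rowK: "(\<integral>\<^sup>+\<omega>. ennreal (exp (- D i \<omega> / 4)) \<partial>M) = ennreal (1 / sqrt (1 + K / (4 * (sg i)\<^sup>2)))"
      if i: "i < n" for i
    proof -
      have Gd: "distributed M lborel (G i) (normal_density 0 (sqrt K))"
      proof -
        define J where "J = (\<lambda>j. Inl (i, j) :: nat \<times> nat + nat) ` T"
        define c where "c = (\<lambda>k::nat \<times> nat + nat. case k of Inl (a, j) \<Rightarrow> v j | Inr _ \<Rightarrow> (1::real))"
        have JI: "J \<subseteq> I" using i Tsub by (auto simp: J_def I_def)
        have finJ: "finite J" using finT by (simp add: J_def)
        have Jne: "J \<noteq> {}" using Tne by (simp add: J_def)
        have injJ: "inj_on (\<lambda>j. Inl (i, j) :: nat \<times> nat + nat) T" by (auto simp: inj_on_def)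
        have cardJ: "card J = card T" unfolding J_def by (rule card_image[OF injJ])
        have indZ: "indep_vars (\<lambda>_. borel) (\<lambda>k \<omega>. c k * Y k \<omega>) J"
          using indep_vars_compose2[OF indep_vars_subset[OF indY JI], of "\<lambda>k x. c k * x" "\<lambda>_. borel"] by simp
        have Zd: "distributed M lborel (\<lambda>\<omega>. c k * Y k \<omega>) (normal_density 0 1)" if k: "k \<in> J" for k
        proof -
          obtain j where j: "j \<in> T" "k = Inl (i, j)" using k by (auto simp: J_def)
          have jp: "j < p" using j Tsub by auto
          have vj: "\<bar>v j\<bar> = 1" using vT[OF j(1)] .
          then have "v j \<noteq> 0" by auto
          from normal_density_affine[OF XN[OF i jp] _ this, of 0]
          have "distributed M lborel (\<lambda>x. 0 + v j * X i j x) (normal_density (0 + v j * 0) (\<bar>v j\<bar> * 1))"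
            by simp
          then show ?thesis using j vj by (simp add: c_def Y_def)
        qed
        have "distributed M lborel (\<lambda>x. \<Sum>k\<in>J. c k * Y k x)
            (normal_density (\<Sum>k\<in>J. 0) (sqrt (\<Sum>k\<in>J. 1\<^sup>2)))"
          by (rule sum_indep_normal[OF finJ Jne indZ]) (use Zd in auto)
        moreover have "(\<lambda>x. \<Sum>k\<in>J. c k * Y k x) = G i"
        proof
          fix x
          have "(\<Sum>k\<in>J. c k * Y k x) = (\<Sum>j\<in>T. v j * X i j x)"
            unfolding J_def by (simp add: sum.reindex[OF injJ] c_def Y_def)
          also have "\<dots> = (\<Sum>j<p. X i j x * v j)"
            by (rule sum.mono_neutral_cong_left) (use Tsub vnT in auto)
          finally show "(\<Sum>k\<in>J. c k * Y k x) = G i x" by (simp add: G_def)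
        qed
        ultimately show ?thesis using cardJ by (simp add: K_def)
      qed
      have ind: "indep_var borel (G i) borel (W i)"
      proof -
        define Ai where "Ai = (Inl ` ({i} \<times> {..<p}) :: (nat \<times> nat + nat) set)"
        define Bi where "Bi = ({Inr i} :: (nat \<times> nat + nat) set)"
        have "indep_var (PiM Ai (\<lambda>_. borel)) (\<lambda>\<omega>. restrict (\<lambda>k. Y k \<omega>) Ai) (PiM Bi (\<lambda>_. borel)) (\<lambda>\<omega>. restrict (\<lambda>k. Y k \<omega>) Bi)"
          by (rule indep_var_restrict[OF indY]) (use i in \<open>auto simp: Ai_def Bi_def I_def\<close>)
        then have "indep_var borel ((\<lambda>h. \<Sum>j<p. h (Inl (i, j)) * v j) \<circ> (\<lambda>\<omega>. restrict (\<lambda>k. Y k \<omega>) Ai))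
            borel ((\<lambda>h. h (Inr i)) \<circ> (\<lambda>\<omega>. restrict (\<lambda>k. Y k \<omega>) Bi))"
        proof (rule indep_var_compose)
          show "(\<lambda>h. \<Sum>j<p. h (Inl (i, j)) * v j) \<in> borel_measurable (PiM Ai (\<lambda>_. borel))"
            by (intro borel_measurable_sum borel_measurable_times measurable_component_singleton borel_measurable_const)
               (auto simp: Ai_def)
          show "(\<lambda>h. h (Inr i)) \<in> PiM Bi (\<lambda>_. borel) \<rightarrow>\<^sub>M borel"
            by (rule measurable_component_singleton) (simp add: Bi_def)
        qed
        moreover have "(\<lambda>h. \<Sum>j<p. h (Inl (i, j)) * v j) \<circ> (\<lambda>\<omega>. restrict (\<lambda>k. Y k \<omega>) Ai) = G i"
          by (auto simp: G_def Ai_def Y_def intro!: sum.cong)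
        moreover have "(\<lambda>h. h (Inr i)) \<circ> (\<lambda>\<omega>. restrict (\<lambda>k. Y k \<omega>) Bi) = W i"
          by (auto simp: Bi_def Y_def)
        ultimately show ?thesis by simp
      qed
      have "(\<integral>\<^sup>+\<omega>. ennreal (exp (- ((G i \<omega> / sg i + W i \<omega>)\<^sup>2 - (W i \<omega>)\<^sup>2) / 4)) \<partial>M)
          = ennreal (1 / sqrt (1 + (sqrt K)\<^sup>2 / (4 * (sg i)\<^sup>2)))"
        by (rule row_mgf[OF Gd _ WN[OF i] ind sgne]) (use \<open>K > 0\<close> in simp)
      then show ?thesis unfolding Ksq D_def .
    qed
    have indD: "indep_vars (\<lambda>_. borel) (\<lambda>i \<omega>. exp (- D i \<omega> / 4)) {..<n}"
    proof -
      define Kf where "Kf = (\<lambda>i. Inl ` ({i} \<times> {..<p}) \<union> {Inr i} :: (nat \<times> nat + nat) set)"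
      define \<Phi> where "\<Phi> = (\<lambda>i h. exp (- (((\<Sum>j<p. h (Inl (i, j)) * v j) / sg i + h (Inr i))\<^sup>2 - (h (Inr i))\<^sup>2) / 4))"
      have "indep_vars (\<lambda>i. PiM (Kf i) (\<lambda>_. borel)) (\<lambda>i \<omega>. restrict (\<lambda>k. Y k \<omega>) (Kf i)) {..<n}"
        by (rule indep_vars_restrict[OF indY]) (auto simp: Kf_def I_def disjoint_family_on_def)
      then have "indep_vars (\<lambda>_. borel) (\<lambda>i \<omega>. \<Phi> i (restrict (\<lambda>k. Y k \<omega>) (Kf i))) {..<n}"
      proof (rule indep_vars_compose2)
        fix i assume "i \<in> {..<n}"
        have m1: "(\<lambda>h. \<Sum>j<p. h (Inl (i, j)) * v j) \<in> borel_measurable (PiM (Kf i) (\<lambda>_. borel))"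
          by (intro borel_measurable_sum borel_measurable_times measurable_component_singleton borel_measurable_const)
             (auto simp: Kf_def)
        have m2: "(\<lambda>h. h (Inr i)) \<in> borel_measurable (PiM (Kf i) (\<lambda>_. borel))"
          by (rule measurable_component_singleton) (simp add: Kf_def)
        show "\<Phi> i \<in> borel_measurable (PiM (Kf i) (\<lambda>_. borel))"
          unfolding \<Phi>_def using m1 m2 by measurable
      qed
      moreover have "(\<lambda>\<omega>. \<Phi> i (restrict (\<lambda>k. Y k \<omega>) (Kf i))) = (\<lambda>\<omega>. exp (- D i \<omega> / 4))" for i
        by (auto simp: \<Phi>_def Kf_def Y_def D_def G_def intro!: sum.cong)
      ultimately show ?thesis by simp
    qed
    have "emeasure M A \<le> (\<integral>\<^sup>+\<omega>. ennreal (exp (- (\<Sum>i<n. D i \<omega>) / 4)) \<partial>M)"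
    proof (cases "A \<in> sets M")
      case True
      then have "emeasure M A = (\<integral>\<^sup>+\<omega>. indicator A \<omega> \<partial>M)" by simp
      also have "\<dots> \<le> (\<integral>\<^sup>+\<omega>. ennreal (exp (- (\<Sum>i<n. D i \<omega>) / 4)) \<partial>M)"
        by (rule nn_integral_mono) (auto simp: Aeq split: split_indicator)
      finally show ?thesis .
    qed (simp add: emeasure_notin_sets)
    also have "\<dots> = (\<integral>\<^sup>+\<omega>. ennreal (\<Prod>i<n. exp (- D i \<omega> / 4)) \<partial>M)"
      by (simp add: exp_sum[symmetric] sum_negf sum_divide_distrib)
    also have "\<dots> = (\<integral>\<^sup>+\<omega>. (\<Prod>i<n. ennreal (exp (- D i \<omega> / 4))) \<partial>M)"
      by (simp add: prod_ennreal)
    also have "\<dots> = (\<Prod>i<n. \<integral>\<^sup>+\<omega>. ennreal (exp (- D i \<omega> / 4)) \<partial>M)"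
    proof -
      have "indep_vars (\<lambda>_. borel) (\<lambda>i \<omega>. ennreal (exp (- D i \<omega> / 4))) {..<n}"
        using indep_vars_compose2[OF indD, of "\<lambda>i x. ennreal x" "\<lambda>_. borel"] by simp
      then show ?thesis
        using indep_vars_nn_integral[of "{..<n}" "\<lambda>i \<omega>. ennreal (exp (- D i \<omega> / 4))"] by simp
    qed
    also have "\<dots> = (\<Prod>i<n. ennreal (1 / sqrt (1 + K / (4 * (sg i)\<^sup>2))))"
      by (rule prod.cong) (use rowK in auto)
    also have "\<dots> = ennreal (\<Prod>i<n. 1 / sqrt (1 + K / (4 * (sg i)\<^sup>2)))"
      by (rule prod_ennreal) (use \<open>K > 0\<close> in \<open>simp add: add_nonneg_nonneg\<close>)
    also have "\<dots> \<le> ennreal R"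
      unfolding R_def sg_def
      by (rule ennreal_leI, rule final_ineq) (use assms(5,6) Kpos assms(4,14) in auto)
    finally have "ennreal (prob A) \<le> ennreal R" by (simp add: emeasure_eq_measure)
    then have "prob A \<le> R" using R0 by simp
    then show ?thesis unfolding A_def R_def .
  qed
qed

end
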